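(* Let $(\mathcal{C},\mathcal{B},Q,S)$ be an STV election, counted by the procedure described in the context. Let $W\subseteq\mathcal{C}$, let $b,c$ be distinct candidates not in $W$, let $\overline{\tau}=(\overline{\tau}_w)_{w\in W}$ be real numbers, and let $G\subseteq\mathcal{C}$ be such that $L_{\mathrm{basic}}(g)>U_{\mathrm{comp}}(c,g)$ (the assertion $\mathsf{AG}(g,c)$) holds for all $g\in G$. Assume that only candidates in $W\cup\{b,c\}$ can be seated, that all candidates in $W$ are seated (this may happen before, during or after the point considered), that for each $w\in W$ the transfer value of any ballot that was in $w$'s pile at the time $w$ was seated is at most $\overline{\tau}_w$, and that $b$ is eligible. Then $U_{\mathrm{complex}}(c,b,W,\overline{\tau},G)$ is an upper bound on the tally of $c$.
   Context: An STV election is a tuple $(\mathcal{C},\mathcal{B},Q,S)$ where $\mathcal{C}$ is a finite set of candidates, $\mathcal{B}$ is a multiset of ballots (each ballot is a finite sequence of distinct candidates, in order of preference, most preferred first, not necessarily containing all candidates), $S$ is the number of seats, and $Q=\lfloor |\mathcal{B}|/(S+1)\rfloor+1$ is the quota. For a sequence $\pi$, $\mathrm{first}(\pi)$ is its first element, and for a set $X$ of candidates, $\sigma_X(\pi)$ is the subsequence of $\pi$ consisting of the elements of $X$, in their original order. Counting: every ballot starts with value $1$ and is placed in the pile of its first-ranked candidate; a candidate's tally is the total value of the ballots in its pile. A candidate is eligible if neither eliminated nor seated. In each round every eligible candidate with tally at least $Q$ is seated (gets a quota), and every ballot in its pile is given a new value, the transfer value (e.g. unweighted Gregory: $(V_c-Q)/|\mathcal{B}_c|$,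 with $V_c$ the total value and $|\mathcal{B}_c|$ the number of ballots in its pile), and moved to the next-ranked eligible candidate on the ballot (or exhausted). If no candidate reaches a quota, the eligible candidate with smallest tally is eliminated and its ballots move at their current value to their next-ranked eligible candidate (or are exhausted). Counting stops when all $S$ seats are filled or the number of eligible candidates equals the number of unfilled seats, in which case all remaining eligible candidates are seated. The transfer-value rule is assumed to satisfy: an upper bound on a ballot's value is the maximum of the upper bounds on the per-candidate transfer values it was subjected to. Definitions (counts with multiplicity): $L_{\mathrm{basic}}(c)=|\{\beta\in\mathcal{B}:\mathrm{first}(\beta)=c\}|$; $U_{\mathrm{comp}}(c,c')=|\{\beta\in\mathcal{B}:\mathrm{first}(\sigma_{\{c,c'\}}(\beta))=c\}|$. Further, $U_{\mathrm{complex}}(c,b,W,\overline{\tau},G)=\sum_{\beta\in\mathcal{B}}u(\beta)$ (sum over the multiset), where $u(\beta)$ is given by the first applicable case: $u(\beta)=0$ if there is $g\in G\setminus W$ with $\mathrm{first}(\sigma_{\{g,c\}}(\beta))=g$; $u(\beta)=0$ if $c$ does not occur in $\beta$; $u(\beta)=0$ if $\mathrm{first}(\sigma_{\{b,c\}}(\beta))=b$; $u(\beta)=\max\{\overline{\tau}_w: w\in W,\ w \text{ precedes } c \text{ in } \beta\}$ if $\mathrm{first}(\beta)\in W$; and $u(\beta)=1$ otherwise. *)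

theory Defs
  imports Complex_Main "HOL-Library.Multiset"
begin

(* Ballots: the multiset of ballots is a list bs (index i = ballot i, so multiplicity
   is respected).  A counting state records seated / eliminated candidates, the pile
   each ballot is in (None = exhausted) and each ballot's current value. *)

record 'c state =
  seated :: "'c set"
  elim   :: "'c set"
  loc    :: "nat \<Rightarrow> 'c option"
  val    :: "nat \<Rightarrow> real"

definition first_opt :: "'c list \<Rightarrow> 'c option" where
  "first_opt xs = (case xs of [] \<Rightarrow> None | x # _ \<Rightarrow> Some x)"

definition sigma :: "'c set \<Rightarrow> 'c list \<Rightarrow> 'c list" where
  "sigma X xs = filter (\<lambda>x. x \<in> X) xs"

definition stv_election :: "'c set \<Rightarrow> 'c list list \<Rightarrow> bool" where
  "stv_election C bs \<longleftrightarrow> finite C \<and> (\<forall>\<beta>\<in>set bs. distinct \<beta> \<and> set \<beta> \<subseteq> C)"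

definition quota :: "'c list list \<Rightarrow> nat \<Rightarrow> real" where
  "quota bs S = real (length bs div (S + 1) + 1)"

definition eligible :: "'c set \<Rightarrow> 'c state \<Rightarrow> 'c set" where
  "eligible C s = C - seated s - elim s"

definition pile :: "'c list list \<Rightarrow> 'c state \<Rightarrow> 'c \<Rightarrow> nat set" where
  "pile bs s c = {i. i < length bs \<and> loc s i = Some c}"

definition tally :: "'c list list \<Rightarrow> 'c state \<Rightarrow> 'c \<Rightarrow> real" where
  "tally bs s c = (\<Sum>i\<in>pile bs s c. val s i)"

definition pile_values :: "'c list list \<Rightarrow> 'c state \<Rightarrow> 'c \<Rightarrow> real multiset" where
  "pile_values bs s c = image_mset (val s) (mset_set (pile bs s c))"

definition next_elig :: "'c set \<Rightarrow> 'c list \<Rightarrow> 'c \<Rightarrow> 'c option" where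
  "next_elig E \<beta> x = find (\<lambda>y. y \<in> E) (tl (dropWhile (\<lambda>y. y \<noteq> x) \<beta>))"

(* A transfer-value rule: tv Q vs v is the new value of a ballot of current value v
   in the pile (with multiset of values vs) of a candidate seated with quota Q.
   E.g. unweighted Gregory: tv Q vs v = (sum_mset vs - Q) / size vs.
   Standing requirement: transfer values are fractions in [0,1]. *)
definition valid_tv :: "(real \<Rightarrow> real multiset \<Rightarrow> real \<Rightarrow> real) \<Rightarrow> bool" where
  "valid_tv tv \<longleftrightarrow> (\<forall>Q vs v. 0 < Q \<longrightarrow> (\<forall>u\<in>#vs. 0 \<le> u \<and> u \<le> 1) \<longrightarrow> v \<in># vs
      \<longrightarrow> Q \<le> sum_mset vs \<longrightarrow> 0 \<le> tv Q vs v \<and> tv Q vs v \<le> 1)"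

definition initial_state :: "'c list list \<Rightarrow> 'c state" where
  "initial_state bs = \<lparr>seated = {}, elim = {}, loc = (\<lambda>i. first_opt (bs ! i)), val = (\<lambda>i. 1)\<rparr>"

definition running :: "'c set \<Rightarrow> nat \<Rightarrow> 'c state \<Rightarrow> bool" where
  "running C S s \<longleftrightarrow> card (seated s) < S \<and> S - card (seated s) < card (eligible C s)"

definition quota_step ::
  "(real \<Rightarrow> real multiset \<Rightarrow> real \<Rightarrow> real) \<Rightarrow> 'c set \<Rightarrow> 'c list list \<Rightarrow> nat
     \<Rightarrow> 'c state \<Rightarrow> 'c state \<Rightarrow> bool" where
  "quota_step tv C bs S s s' \<longleftrightarrow>
    (let E = eligible C s; Q = quota bs S; X = {e \<in> E. Q \<le> tally bs s e} in
      X \<noteq> {} \<and>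
      s' = \<lparr>seated = seated s \<union> X, elim = elim s,
            loc = (\<lambda>i. case loc s i of None \<Rightarrow> None
                     | Some x \<Rightarrow> if x \<in> X then next_elig (E - X) (bs ! i) x else Some x),
            val = (\<lambda>i. case loc s i of None \<Rightarrow> val s i
                     | Some x \<Rightarrow> if x \<in> X then tv Q (pile_values bs s x) (val s i) else val s i)\<rparr>)"

definition elim_step :: "'c set \<Rightarrow> 'c list list \<Rightarrow> nat \<Rightarrow> 'c state \<Rightarrow> 'c state \<Rightarrow> bool" where
  "elim_step C bs S s s' \<longleftrightarrow>
    (let E = eligible C s in
      (\<forall>e\<in>E. tally bs s e < quota bs S) \<and>
      (\<exists>e\<in>E. (\<forall>e'\<in>E. tally bs s e \<le> tally bs s e') \<and>
         s' = \<lparr>seated = seated s, elim = elim s \<union> {e},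
               loc = (\<lambda>i. if loc s i = Some e then next_elig (E - {e}) (bs ! i) e else loc s i),
               val = val s\<rparr>))"

definition final_step :: "'c set \<Rightarrow> nat \<Rightarrow> 'c state \<Rightarrow> 'c state \<Rightarrow> bool" where
  "final_step C S s s' \<longleftrightarrow>
    card (seated s) < S \<and> card (eligible C s) = S - card (seated s) \<and>
    s' = s\<lparr>seated := seated s \<union> eligible C s\<rparr>"

definition stv_step ::
  "(real \<Rightarrow> real multiset \<Rightarrow> real \<Rightarrow> real) \<Rightarrow> 'c set \<Rightarrow> 'c list list \<Rightarrow> nat
     \<Rightarrow> 'c state \<Rightarrow> 'c state \<Rightarrow> bool" where
  "stv_step tv C bs S s s' \<longleftrightarrow>
     (running C S s \<and> (quota_step tv C bs S s s' \<or> elim_step C bs S s s')) \<or> final_step C S s s'"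

definition stv_run ::
  "(real \<Rightarrow> real multiset \<Rightarrow> real \<Rightarrow> real) \<Rightarrow> 'c set \<Rightarrow> 'c list list \<Rightarrow> nat
     \<Rightarrow> (nat \<Rightarrow> 'c state) \<Rightarrow> nat \<Rightarrow> bool" where
  "stv_run tv C bs S sts n \<longleftrightarrow>
     sts 0 = initial_state bs \<and> (\<forall>k<n. stv_step tv C bs S (sts k) (sts (Suc k))) \<and>
     \<not> (\<exists>s'. stv_step tv C bs S (sts n) s')"

definition L_basic :: "'c list list \<Rightarrow> 'c \<Rightarrow> nat" where
  "L_basic bs c = length (filter (\<lambda>\<beta>. first_opt \<beta> = Some c) bs)"

definition U_comp :: "'c list list \<Rightarrow> 'c \<Rightarrow> 'c \<Rightarrow> nat" where
  "U_comp bs c c' = length (filter (\<lambda>\<beta>. first_opt (sigma {c, c'} \<beta>) = Some c) bs)"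

definition AG :: "'c list list \<Rightarrow> 'c \<Rightarrow> 'c \<Rightarrow> bool" where
  "AG bs g c \<longleftrightarrow> L_basic bs g > U_comp bs c g"

definition precedes :: "'c \<Rightarrow> 'c \<Rightarrow> 'c list \<Rightarrow> bool" where
  "precedes x y \<beta> \<longleftrightarrow> x \<in> set (takeWhile (\<lambda>z. z \<noteq> y) \<beta>)"

definition u_complex :: "'c \<Rightarrow> 'c \<Rightarrow> 'c set \<Rightarrow> ('c \<Rightarrow> real) \<Rightarrow> 'c set \<Rightarrow> 'c list \<Rightarrow> real" where
  "u_complex c b W \<tau> G \<beta> =
    (if \<exists>g\<in>G - W. first_opt (sigma {g, c} \<beta>) = Some g then 0
     else if c \<notin> set \<beta> then 0
     else if first_opt (sigma {b, c} \<beta>) = Some b then 0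
     else if (\<exists>w\<in>W. first_opt \<beta> = Some w) then Max (\<tau> ` {w \<in> W. precedes w c \<beta>})
     else 1)"

definition U_complex :: "'c list list \<Rightarrow> 'c \<Rightarrow> 'c \<Rightarrow> 'c set \<Rightarrow> ('c \<Rightarrow> real) \<Rightarrow> 'c set \<Rightarrow> real" where
  "U_complex bs c b W \<tau> G = (\<Sum>\<beta>\<leftarrow>bs. u_complex c b W \<tau> G \<beta>)"

end

theory Submission imports Defs begin

lemma precedes_split:
  assumes "y \<notin> set p"
  shows "precedes z y (p @ y # q) \<longleftrightarrow> z \<in> set p"
proof -
  have "takeWhile (\<lambda>u. u \<noteq> y) (p @ y # q) = p"
    using assms by (induction p) auto
  then show ?thesis by (simp add: precedes_def)
qed

lemma find_split:
  "find P q = Some y \<Longrightarrow> \<exists>q1 q2. q = q1 @ y # q2 \<and> P y \<and> (\<forall>z\<in>set q1. \<not> P z)"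
proof (induction q)
  case Nil then show ?case by simp
next
  case (Cons a q)
  show ?case
  proof (cases "P a")
    case True then show ?thesis using Cons.prems by (intro exI[of _ "[]"] exI[of _ q]) auto
  next
    case False
    then have "find P q = Some y" using Cons.prems by simp
    from Cons.IH[OF this] obtain q1 q2 where "q = q1 @ y # q2" "P y" "\<forall>z\<in>set q1. \<not> P z" by blast
    then show ?thesis using False by (intro exI[of _ "a # q1"] exI[of _ q2]) auto
  qed
qed

lemma next_elig_props:
  assumes d: "distinct \<beta>" and x: "x \<in> set \<beta>" and ne: "next_elig E \<beta> x = Some y"
  shows "y \<in> E" "y \<in> set \<beta>" "precedes x y \<beta>"
    "\<And>z. precedes z y \<beta> \<Longrightarrow> z = x \<or> precedes z x \<beta> \<or> z \<notin> E"
    "\<And>z. precedes z x \<beta> \<Longrightarrow> precedes z y \<beta>"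
proof -
  obtain p q where b: "\<beta> = p @ x # q" and xp: "x \<notin> set p"
    using split_list_first[OF x] by blast
  have "dropWhile (\<lambda>u. u \<noteq> x) \<beta> = x # q"
    using xp b by (induction p arbitrary: \<beta>) auto
  then have "find (\<lambda>u. u \<in> E) q = Some y" using ne by (simp add: next_elig_def)
  from find_split[OF this] obtain q1 q2 where q: "q = q1 @ y # q2" "y \<in> E" "\<forall>z\<in>set q1. z \<notin> E"
    by blast
  have b2: "\<beta> = (p @ x # q1) @ y # q2" using b q by simp
  have yn: "y \<notin> set (p @ x # q1)" using d b2 by auto
  have pz: "precedes z y \<beta> \<longleftrightarrow> z \<in> set (p @ x # q1)" for z
    using precedes_split[OF yn] b2 by simp
  have px: "precedes z x \<beta> \<longleftrightarrow> z \<in> set p" for z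
    using precedes_split[OF xp] b by simp
  show "y \<in> E" by fact
  show "y \<in> set \<beta>" using b2 by simp
  show "precedes x y \<beta>" using pz by simp
  show "\<And>z. precedes z y \<beta> \<Longrightarrow> z = x \<or> precedes z x \<beta> \<or> z \<notin> E"
    using pz px q(3) by auto
  show "\<And>z. precedes z x \<beta> \<Longrightarrow> precedes z y \<beta>" using pz px by auto
qed

lemma sigma_first_precedes:
  assumes d: "distinct \<beta>" and c: "c \<in> set \<beta>" and gc: "g \<noteq> c"
    and f: "first_opt (sigma {g, c} \<beta>) = Some g"
  shows "precedes g c \<beta>"
proof -
  obtain p q where b: "\<beta> = p @ c # q" and cp: "c \<notin> set p"
    using split_list_first[OF c] by blast
  have "sigma {g,c} \<beta> = filter (\<lambda>x. x \<in> {g,c}) p @ c # filter (\<lambda>x. x \<in> {g,c}) q"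
    using b by (simp add: sigma_def)
  with f gc have "filter (\<lambda>x. x \<in> {g,c}) p \<noteq> [] \<and> hd (filter (\<lambda>x. x \<in> {g,c}) p) = g"
    by (cases "filter (\<lambda>x. x \<in> {g,c}) p") (auto simp: first_opt_def)
  then have "g \<in> set (filter (\<lambda>x. x \<in> {g,c}) p)" by (metis list.set_sel(1))
  then have "g \<in> set p" by simp
  then show ?thesis using precedes_split[OF cp] b by simp
qed

lemma sigma_first_c:
  assumes d: "distinct \<beta>" and c: "c \<in> set \<beta>" and np: "\<not> precedes g c \<beta>"
  shows "first_opt (sigma {c, g} \<beta>) = Some c"
proof -
  obtain p q where b: "\<beta> = p @ c # q" and cp: "c \<notin> set p"
    using split_list_first[OF c] by blast
  have gp: "g \<notin> set p" using np precedes_split[OF cp] b by simp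
  have "filter (\<lambda>x. x \<in> {c,g}) p = []" using gp cp by (auto simp: filter_empty_conv)
  then show ?thesis using b by (simp add: sigma_def first_opt_def)
qed

lemma first_precedes:
  assumes "first_opt \<beta> = Some w" "c \<in> set \<beta>" "w \<noteq> c"
  shows "precedes w c \<beta>"
  using assms by (cases \<beta>) (auto simp: first_opt_def precedes_def)


definition ginv :: "'c set \<Rightarrow> 'c list list \<Rightarrow> 'c state \<Rightarrow> bool" where
  "ginv C bs s \<longleftrightarrow> (\<forall>i<length bs. 0 \<le> val s i \<and> val s i \<le> 1) \<and> seated s \<inter> elim s = {} \<and>
     (\<forall>i<length bs. \<forall>w\<in>C. first_opt (bs!i) = Some w \<and> w \<notin> seated s \<and> w \<notin> elim s
        \<longrightarrow> loc s i = Some w \<and> val s i = 1)"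

lemma step_mono:
  assumes "stv_step tv C bs S s s'"
  shows "seated s \<subseteq> seated s' \<and> elim s \<subseteq> elim s'"
  using assms by (auto simp: stv_step_def quota_step_def elim_step_def final_step_def Let_def)

lemma elig_mono:
  assumes "stv_step tv C bs S s s'"
  shows "eligible C s' \<subseteq> eligible C s"
  using step_mono[OF assms] by (auto simp: eligible_def)

lemma final_empty: "final_step C S s s' \<Longrightarrow> eligible C s' = {}"
  by (auto simp: final_step_def eligible_def)

lemma pile_finite: "finite (pile bs s c)"
  by (rule finite_subset[of _ "{..<length bs}"]) (auto simp: pile_def)

lemma quota_pos: "0 < quota bs S"
  by (simp add: quota_def)

lemma ginv_init: "ginv C bs (initial_state bs)"
  by (simp add: ginv_def initial_state_def)

lemma ginv_step:
  assumes tv: "valid_tv tv" and g: "ginv C bs s" and st: "stv_step tv C bs S s s'"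
  shows "ginv C bs s'"
proof -
  have vals: "\<forall>i<length bs. 0 \<le> val s i \<and> val s i \<le> 1" and disj: "seated s \<inter> elim s = {}"
    and fst: "\<forall>i<length bs. \<forall>w\<in>C. first_opt (bs!i) = Some w \<and> w \<notin> seated s \<and> w \<notin> elim s
        \<longrightarrow> loc s i = Some w \<and> val s i = 1" using g by (auto simp: ginv_def)
  consider (q) "quota_step tv C bs S s s'" | (e) "elim_step C bs S s s'" | (f) "final_step C S s s'"
    using st by (auto simp: stv_step_def)
  then show ?thesis
  proof cases
    case q
    define E where "E = eligible C s"
    define Q where "Q = quota bs S"
    define X where "X = {e \<in> E. Q \<le> tally bs s e}"
    have s': "s' = \<lparr>seated = seated s \<union> X, elim = elim s,
            loc = (\<lambda>i. case loc s i of None \<Rightarrow> None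
                     | Some x \<Rightarrow> if x \<in> X then next_elig (E - X) (bs ! i) x else Some x),
            val = (\<lambda>i. case loc s i of None \<Rightarrow> val s i
                     | Some x \<Rightarrow> if x \<in> X then tv Q (pile_values bs s x) (val s i) else val s i)\<rparr>"
      using q unfolding quota_step_def Let_def E_def Q_def X_def by (rule conjunct2)
    have XE: "X \<subseteq> E" by (auto simp: X_def)
    have v': "0 \<le> val s' i \<and> val s' i \<le> 1" if i: "i < length bs" for i
    proof (cases "loc s i")
      case None then show ?thesis using s' vals i by simp
    next
      case (Some x)
      show ?thesis
      proof (cases "x \<in> X")
        case False then show ?thesis using s' vals i Some by simp
      next
        case True
        have ip: "i \<in> pile bs s x" using i Some by (simp add: pile_def)
        have a1: "\<forall>u\<in>#pile_values bs s x. 0 \<le> u \<and> u \<le> 1"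
          using vals pile_finite[of bs s x] by (auto simp: pile_values_def pile_def)
        have a2: "val s i \<in># pile_values bs s x"
          using ip pile_finite[of bs s x] by (simp add: pile_values_def)
        have a3: "Q \<le> sum_mset (pile_values bs s x)"
          using True by (simp add: X_def pile_values_def tally_def sum_unfold_sum_mset)
        have "0 \<le> tv Q (pile_values bs s x) (val s i) \<and> tv Q (pile_values bs s x) (val s i) \<le> 1"
          using tv quota_pos[of bs S] a1 a2 a3 unfolding valid_tv_def Q_def by blast
        then show ?thesis using s' Some True by simp
      qed
    qed
    have d': "seated s' \<inter> elim s' = {}" using s' disj XE by (auto simp: E_def eligible_def)
    have f': "loc s' i = Some w \<and> val s' i = 1"
      if i: "i < length bs" and w: "w \<in> C" "first_opt (bs!i) = Some w" "w \<notin> seated s'" "w \<notin> elim s'"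
      for i w
    proof -
      have "w \<notin> seated s" "w \<notin> elim s" "w \<notin> X" using w s' by auto
      then have "loc s i = Some w \<and> val s i = 1" using fst i w by blast
      then show ?thesis using s' \<open>w \<notin> X\<close> by simp
    qed
    show ?thesis using v' d' f' by (auto simp: ginv_def)
  next
    case e
    then obtain x where s': "s' = \<lparr>seated = seated s, elim = elim s \<union> {x},
               loc = (\<lambda>i. if loc s i = Some x then next_elig (eligible C s - {x}) (bs ! i) x else loc s i),
               val = val s\<rparr>" and xE: "x \<in> eligible C s"
      by (auto simp: elim_step_def Let_def)
    have d': "seated s' \<inter> elim s' = {}" using s' disj xE by (auto simp: eligible_def)
    have f': "loc s' i = Some w \<and> val s' i = 1"
      if i: "i < length bs" and w: "w \<in> C" "first_opt (bs!i) = Some w" "w \<notin> seated s'" "w \<notin> elim s'"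
      for i w
    proof -
      have "w \<notin> seated s" "w \<notin> elim s" "w \<noteq> x" using w s' by auto
      then have "loc s i = Some w \<and> val s i = 1" using fst i w by blast
      then show ?thesis using s' \<open>w \<noteq> x\<close> by simp
    qed
    show ?thesis using vals d' f' s' by (auto simp: ginv_def)
  next
    case f
    then have s': "s' = s\<lparr>seated := seated s \<union> eligible C s\<rparr>" by (simp add: final_step_def)
    have d': "seated s' \<inter> elim s' = {}" using s' disj by (auto simp: eligible_def)
    have f': "loc s' i = Some w \<and> val s' i = 1"
      if i: "i < length bs" and w: "w \<in> C" "first_opt (bs!i) = Some w" "w \<notin> seated s'" "w \<notin> elim s'"
      for i w
    proof -
      have "w \<notin> seated s" "w \<notin> elim s" using w s' by auto
      then have "loc s i = Some w \<and> val s i = 1" using fst i w by blast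
      then show ?thesis using s' by simp
    qed
    show ?thesis using vals d' f' s' by (auto simp: ginv_def)
  qed
qed


definition linv :: "'c set \<Rightarrow> 'c list list \<Rightarrow> 'c set \<Rightarrow> ('c \<Rightarrow> real) \<Rightarrow> bool \<Rightarrow> 'c state \<Rightarrow> bool" where
  "linv C bs W \<tau> P s \<longleftrightarrow> (\<forall>i<length bs. \<forall>x. loc s i = Some x \<longrightarrow>
     x \<in> set (bs!i) \<and> x \<in> eligible C s \<and> (\<forall>y. precedes y x (bs!i) \<longrightarrow> y \<notin> eligible C s) \<and>
     (P \<longrightarrow> ((val s i = 1 \<and> (\<forall>w\<in>W. first_opt (bs!i) = Some w \<longrightarrow> x = w)) \<or>
            (\<exists>w\<in>W. precedes w x (bs!i) \<and> val s i \<le> \<tau> w))))"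

lemma linv_init:
  assumes "stv_election C bs"
  shows "linv C bs W \<tau> P (initial_state bs)"
  unfolding linv_def
proof (intro allI impI)
  fix i x assume i: "i < length bs" and l: "loc (initial_state bs) i = Some x"
  then have f: "first_opt (bs!i) = Some x" by (simp add: initial_state_def)
  then obtain r where b: "bs!i = x # r" by (cases "bs!i") (auto simp: first_opt_def)
  have "set (bs!i) \<subseteq> C" using assms i by (auto simp: stv_election_def)
  then have "x \<in> C" using b by simp
  then show "x \<in> set (bs!i) \<and> x \<in> eligible C (initial_state bs) \<and>
     (\<forall>y. precedes y x (bs!i) \<longrightarrow> y \<notin> eligible C (initial_state bs)) \<and>
     (P \<longrightarrow> ((val (initial_state bs) i = 1 \<and> (\<forall>w\<in>W. first_opt (bs!i) = Some w \<longrightarrow> x = w)) \<or>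
            (\<exists>w\<in>W. precedes w x (bs!i) \<and> val (initial_state bs) i \<le> \<tau> w)))"
    using b f by (auto simp: initial_state_def eligible_def precedes_def)
qed

lemma linv_step:
  assumes dist: "\<forall>\<beta>\<in>set bs. distinct \<beta>"
    and L: "linv C bs W \<tau> P s"
    and st: "quota_step tv C bs S s s' \<or> elim_step C bs S s s'"
    and hP: "P \<Longrightarrow> seated s' - seated s \<subseteq> W"
    and hE: "elim s' \<inter> W = {}"
    and hT: "\<forall>w\<in>W. w \<in> seated s' - seated s \<longrightarrow> (\<forall>i\<in>pile bs s w. val s' i \<le> \<tau> w)"
  shows "linv C bs W \<tau> P s'"
  using st
proof
  assume q: "quota_step tv C bs S s s'"
  define E where "E = eligible C s"
  define Q where "Q = quota bs S"
  define X where "X = {e \<in> E. Q \<le> tally bs s e}"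
  have s': "s' = \<lparr>seated = seated s \<union> X, elim = elim s,
          loc = (\<lambda>i. case loc s i of None \<Rightarrow> None
                   | Some x \<Rightarrow> if x \<in> X then next_elig (E - X) (bs ! i) x else Some x),
          val = (\<lambda>i. case loc s i of None \<Rightarrow> val s i
                   | Some x \<Rightarrow> if x \<in> X then tv Q (pile_values bs s x) (val s i) else val s i)\<rparr>"
    using q unfolding quota_step_def Let_def E_def Q_def X_def by (rule conjunct2)
  have XE: "X \<subseteq> E" by (auto simp: X_def)
  have E': "eligible C s' = E - X" using s' by (auto simp: E_def eligible_def)
  show ?thesis unfolding linv_def
  proof (intro allI impI)
    fix i y assume i: "i < length bs" and l: "loc s' i = Some y"
    have d: "distinct (bs!i)" using dist i by simp
    obtain x where lx: "loc s i = Some x" using l s' by (cases "loc s i") auto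
    have Lx: "x \<in> set (bs!i)" "x \<in> E" "\<And>z. precedes z x (bs!i) \<Longrightarrow> z \<notin> E"
      "P \<Longrightarrow> ((val s i = 1 \<and> (\<forall>w\<in>W. first_opt (bs!i) = Some w \<longrightarrow> x = w)) \<or>
            (\<exists>w\<in>W. precedes w x (bs!i) \<and> val s i \<le> \<tau> w))"
      using L i lx unfolding linv_def E_def by blast+
    show "y \<in> set (bs!i) \<and> y \<in> eligible C s' \<and> (\<forall>z. precedes z y (bs!i) \<longrightarrow> z \<notin> eligible C s') \<and>
     (P \<longrightarrow> ((val s' i = 1 \<and> (\<forall>w\<in>W. first_opt (bs!i) = Some w \<longrightarrow> y = w)) \<or>
            (\<exists>w\<in>W. precedes w y (bs!i) \<and> val s' i \<le> \<tau> w)))"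
    proof (cases "x \<in> X")
      case True
      have ne: "next_elig (E - X) (bs!i) x = Some y" using l s' lx True by simp
      note N = next_elig_props[OF d Lx(1) ne]
      have c3: "\<forall>z. precedes z y (bs!i) \<longrightarrow> z \<notin> eligible C s'"
        using N(4) Lx(3) E' True by blast
      have c4: "\<exists>w\<in>W. precedes w y (bs!i) \<and> val s' i \<le> \<tau> w" if P
      proof -
        have xW: "x \<in> W" using hP[OF that] s' True E' XE by (auto simp: E_def eligible_def)
        have "x \<in> seated s' - seated s" using s' True XE by (auto simp: E_def eligible_def)
        moreover have "i \<in> pile bs s x" using i lx by (simp add: pile_def)
        ultimately have "val s' i \<le> \<tau> x" using hT xW by blast
        then show ?thesis using xW N(3) by blast
      qed
      show ?thesis using N(1,2) E' c3 c4 by blast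
    next
      case False
      have ly: "y = x" using l s' lx False by simp
      have vv: "val s' i = val s i" using s' lx False by simp
      have "x \<in> eligible C s'" using Lx(2) False E' by simp
      moreover have "\<forall>z. precedes z x (bs!i) \<longrightarrow> z \<notin> eligible C s'" using Lx(3) E' by blast
      ultimately show ?thesis unfolding ly vv using Lx(1,4) by blast
    qed
  qed
next
  assume e: "elim_step C bs S s s'"
  then obtain e where s': "s' = \<lparr>seated = seated s, elim = elim s \<union> {e},
               loc = (\<lambda>i. if loc s i = Some e then next_elig (eligible C s - {e}) (bs ! i) e else loc s i),
               val = val s\<rparr>" and eE: "e \<in> eligible C s"
    by (auto simp: elim_step_def Let_def)
  have E': "eligible C s' = eligible C s - {e}" using s' by (auto simp: eligible_def)
  have eW: "e \<notin> W" using hE s' by auto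
  show ?thesis unfolding linv_def
  proof (intro allI impI)
    fix i y assume i: "i < length bs" and l: "loc s' i = Some y"
    have d: "distinct (bs!i)" using dist i by simp
    obtain x where lx: "loc s i = Some x" using l s' by (cases "loc s i") (auto split: if_splits)
    have Lx: "x \<in> set (bs!i)" "x \<in> eligible C s" "\<And>z. precedes z x (bs!i) \<Longrightarrow> z \<notin> eligible C s"
      "P \<Longrightarrow> ((val s i = 1 \<and> (\<forall>w\<in>W. first_opt (bs!i) = Some w \<longrightarrow> x = w)) \<or>
            (\<exists>w\<in>W. precedes w x (bs!i) \<and> val s i \<le> \<tau> w))"
      using L i lx unfolding linv_def by blast+
    have vv: "val s' i = val s i" using s' by simp
    show "y \<in> set (bs!i) \<and> y \<in> eligible C s' \<and> (\<forall>z. precedes z y (bs!i) \<longrightarrow> z \<notin> eligible C s') \<and>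
     (P \<longrightarrow> ((val s' i = 1 \<and> (\<forall>w\<in>W. first_opt (bs!i) = Some w \<longrightarrow> y = w)) \<or>
            (\<exists>w\<in>W. precedes w y (bs!i) \<and> val s' i \<le> \<tau> w)))"
    proof (cases "x = e")
      case True
      have ne: "next_elig (eligible C s - {e}) (bs!i) x = Some y" using l s' lx True by simp
      note N = next_elig_props[OF d Lx(1) ne]
      have c3: "\<forall>z. precedes z y (bs!i) \<longrightarrow> z \<notin> eligible C s'"
        using N(4) Lx(3) E' True by blast
      have c4: "(val s' i = 1 \<and> (\<forall>w\<in>W. first_opt (bs!i) = Some w \<longrightarrow> y = w)) \<or>
            (\<exists>w\<in>W. precedes w y (bs!i) \<and> val s' i \<le> \<tau> w)" if P
        using Lx(4)[OF that] N(5) vv True eW by metis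
      show ?thesis using N(1,2) E' c3 c4 by blast
    next
      case False
      have ly: "y = x" using l s' lx False by simp
      have "x \<in> eligible C s'" using Lx(2) False E' by simp
      moreover have "\<forall>z. precedes z x (bs!i) \<longrightarrow> z \<notin> eligible C s'" using Lx(3) E' by blast
      ultimately show ?thesis unfolding ly vv using Lx(1,4) by blast
    qed
  qed
qed


lemma exists_change: "\<not> P (0::nat) \<Longrightarrow> P n \<Longrightarrow> \<exists>j<n. \<not> P j \<and> P (Suc j)"
proof (induction n)
  case 0 then show ?case by simp
next
  case (Suc n)
  show ?case
  proof (cases "P n")
    case True then show ?thesis using Suc by (metis less_SucI)
  next
    case False then show ?thesis using Suc.prems by blast
  qed
qed

lemma length_filter_mono: "(\<And>x. P x \<Longrightarrow> Q x) \<Longrightarrow> length (filter P xs) \<le> length (filter Q xs)"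
  by (induction xs) auto

theorem lemma4:
  fixes C :: "'c set" and bs :: "'c list list" and S :: nat
    and tv :: "real \<Rightarrow> real multiset \<Rightarrow> real \<Rightarrow> real"
    and sts :: "nat \<Rightarrow> 'c state" and n k :: nat
    and W G :: "'c set" and b c :: 'c and \<tau> :: "'c \<Rightarrow> real"
  assumes "stv_election C bs"
    and "valid_tv tv"
    and "stv_run tv C bs S sts n"
    and "W \<subseteq> C" and "b \<in> C" and "c \<in> C" and "b \<noteq> c" and "b \<notin> W" and "c \<notin> W"
    and "G \<subseteq> C" and "\<forall>g\<in>G. AG bs g c"
    and "seated (sts n) \<subseteq> W \<union> {b, c}"
    and "W \<subseteq> seated (sts n)"
    and "\<forall>j<n. \<forall>w\<in>W. w \<in> seated (sts (Suc j)) - seated (sts j) \<longrightarrow>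
           (\<forall>i\<in>pile bs (sts j) w. val (sts (Suc j)) i \<le> \<tau> w)"
    and "k \<le> n"
    and "b \<in> eligible C (sts k)"
  shows "tally bs (sts k) c \<le> U_complex bs c b W \<tau> G"
proof -
  note el = assms(1) and tvv = assms(2) and run = assms(3) and WC = assms(4) and bC = assms(5)
    and cC = assms(6) and bc = assms(7) and bW = assms(8) and cW = assms(9) and GC = assms(10)
    and AGall = assms(11) and seatn = assms(12) and Wseat = assms(13) and hT = assms(14)
    and kn = assms(15) and bel = assms(16)
  have s0: "sts 0 = initial_state bs" and steps: "\<And>t. t < n \<Longrightarrow> stv_step tv C bs S (sts t) (sts (Suc t))"
    using run by (auto simp: stv_run_def)
  have dist: "\<forall>\<beta>\<in>set bs. distinct \<beta>" and finC: "finite C" using el by (auto simp: stv_election_def)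
  have finW: "finite W" using finC WC finite_subset by blast
  have mono: "\<forall>t\<le>t'. seated (sts t) \<subseteq> seated (sts t') \<and> elim (sts t) \<subseteq> elim (sts t') \<and>
      eligible C (sts t') \<subseteq> eligible C (sts t)" if "t' \<le> n" for t'
    using that
  proof (induction t')
    case 0 then show ?case by simp
  next
    case (Suc t')
    have st: "stv_step tv C bs S (sts t') (sts (Suc t'))" using steps Suc.prems by simp
    note m1 = step_mono[OF st] and m2 = elig_mono[OF st]
    have IH: "\<forall>t\<le>t'. seated (sts t) \<subseteq> seated (sts t') \<and> elim (sts t) \<subseteq> elim (sts t') \<and>
      eligible C (sts t') \<subseteq> eligible C (sts t)" using Suc by simp
    show ?case
    proof (intro allI impI)
      fix t assume "t \<le> Suc t'"
      then consider "t = Suc t'" | "t \<le> t'" by linarith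
      then show "seated (sts t) \<subseteq> seated (sts (Suc t')) \<and> elim (sts t) \<subseteq> elim (sts (Suc t')) \<and>
      eligible C (sts (Suc t')) \<subseteq> eligible C (sts t)"
      proof cases
        case 1 then show ?thesis by simp
      next
        case 2 then show ?thesis using IH m1 m2 by blast
      qed
    qed
  qed
  have ginv: "ginv C bs (sts t)" if "t \<le> n" for t
    using that
  proof (induction t)
    case 0 then show ?case using s0 ginv_init by simp
  next
    case (Suc t) then show ?case using ginv_step[OF tvv _ steps] by simp
  qed
  have disjW: "elim (sts t) \<inter> W = {}" if "t \<le> n" for t
  proof -
    have "seated (sts n) \<inter> elim (sts n) = {}" using ginv[of n] by (simp add: ginv_def)
    moreover have "elim (sts t) \<subseteq> elim (sts n)" using mono[of n] that by simp
    ultimately show ?thesis using Wseat by blast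
  qed
  have belt: "b \<in> eligible C (sts t)" if "t \<le> k" for t
    using mono[OF kn] that bel by blast
  have nonfinal: "quota_step tv C bs S (sts t) (sts (Suc t)) \<or> elim_step C bs S (sts t) (sts (Suc t))"
    if "t < k" for t
  proof -
    have st: "stv_step tv C bs S (sts t) (sts (Suc t))" using steps that kn by simp
    have "\<not> final_step C S (sts t) (sts (Suc t))"
      using final_empty belt[of "Suc t"] that by fastforce
    then show ?thesis using st by (auto simp: stv_step_def)
  qed
  define P where "P = (c \<in> eligible C (sts k))"
  have linv: "linv C bs W \<tau> P (sts t)" if "t \<le> k" for t
    using that
  proof (induction t)
    case 0 then show ?case using s0 linv_init[OF el] by simp
  next
    case (Suc t)
    have tk: "t < k" and tn: "t < n" using Suc.prems kn by auto
    have hP: "seated (sts (Suc t)) - seated (sts t) \<subseteq> W" if P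
    proof
      fix x assume x: "x \<in> seated (sts (Suc t)) - seated (sts t)"
      have "Suc t \<le> n" using Suc.prems kn by simp
      then have "seated (sts (Suc t)) \<subseteq> seated (sts n)" using mono[OF order_refl] by blast
      then have "x \<in> seated (sts n)" using x by blast
      then have "x \<in> W \<union> {b, c}" using seatn by blast
      moreover have "b \<in> eligible C (sts (Suc t))" using belt Suc.prems by simp
      moreover have "c \<in> eligible C (sts (Suc t))" using \<open>P\<close> mono[OF kn] Suc.prems unfolding P_def by blast
      ultimately show "x \<in> W" using x by (auto simp: eligible_def)
    qed
    have hE: "elim (sts (Suc t)) \<inter> W = {}" using disjW Suc.prems kn by simp
    have hT': "\<forall>w\<in>W. w \<in> seated (sts (Suc t)) - seated (sts t) \<longrightarrow>
        (\<forall>i\<in>pile bs (sts t) w. val (sts (Suc t)) i \<le> \<tau> w)" using hT tn by blast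
    show ?case using linv_step[OF dist Suc.IH[OF less_imp_le[OF tk]] nonfinal[OF tk] hP hE hT'] by blast
  qed
  have tau_nonneg: "0 \<le> \<tau> w" if w: "w \<in> W" and i: "i < length bs" and f: "first_opt (bs!i) = Some w" for w i
  proof -
    have "\<not> (w \<in> seated (sts 0))" using s0 by (simp add: initial_state_def)
    moreover have "w \<in> seated (sts n)" using Wseat w by blast
    ultimately obtain j where j: "j < n" "w \<notin> seated (sts j)" "w \<in> seated (sts (Suc j))"
      using exists_change[of "\<lambda>t. w \<in> seated (sts t)" n] by blast
    have "w \<notin> elim (sts j)" using disjW[of j] j w by auto
    moreover have "w \<in> C" using w WC by blast
    ultimately have "loc (sts j) i = Some w" using ginv[of j] j i f unfolding ginv_def by (meson less_imp_le)
    then have "i \<in> pile bs (sts j) w" using i by (simp add: pile_def)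
    then have "val (sts (Suc j)) i \<le> \<tau> w" using hT j w by blast
    moreover have "0 \<le> val (sts (Suc j)) i" using ginv[of "Suc j"] j i by (simp add: ginv_def)
    ultimately show ?thesis by simp
  qed
  have u_nonneg: "0 \<le> u_complex c b W \<tau> G (bs!i)" if i: "i < length bs" for i
  proof (cases "\<exists>w\<in>W. first_opt (bs!i) = Some w \<and> c \<in> set (bs!i)")
    case True
    then obtain w where w: "w \<in> W" "first_opt (bs!i) = Some w" "c \<in> set (bs!i)" by blast
    have "precedes w c (bs!i)" using first_precedes[OF w(2,3)] w(1) cW by blast
    then have "\<tau> w \<le> Max (\<tau> ` {w \<in> W. precedes w c (bs!i)})"
      using finW w(1) by (intro Max_ge) auto
    moreover have "0 \<le> \<tau> w" using tau_nonneg w i by blast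
    ultimately show ?thesis by (simp add: u_complex_def)
  next
    case False then show ?thesis by (auto simp: u_complex_def)
  qed
  have ballot: "val (sts k) i \<le> u_complex c b W \<tau> G (bs!i)" if ip: "i \<in> pile bs (sts k) c" for i
  proof -
    define \<beta> where "\<beta> = bs!i"
    define s where "s = sts k"
    have i: "i < length bs" and l: "loc s i = Some c" using ip by (auto simp: pile_def s_def)
    have d: "distinct \<beta>" using dist i by (simp add: \<beta>_def)
    have L: "c \<in> set \<beta>" "c \<in> eligible C s" "\<And>y. precedes y c \<beta> \<Longrightarrow> y \<notin> eligible C s"
      "P \<Longrightarrow> ((val s i = 1 \<and> (\<forall>w\<in>W. first_opt \<beta> = Some w \<longrightarrow> c = w)) \<or>
            (\<exists>w\<in>W. precedes w c \<beta> \<and> val s i \<le> \<tau> w))"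
      using linv[of k] i l unfolding linv_def s_def \<beta>_def by blast+
    have Pt: P using L(2) by (simp add: P_def s_def)
    have bs: "b \<in> eligible C s" using bel by (simp add: s_def)
    have nA: "\<not> (\<exists>g\<in>G - W. first_opt (sigma {g, c} \<beta>) = Some g)"
    proof
      assume "\<exists>g\<in>G - W. first_opt (sigma {g, c} \<beta>) = Some g"
      then obtain g where g: "g \<in> G" "g \<notin> W" "first_opt (sigma {g, c} \<beta>) = Some g" by blast
      have AGg: "U_comp bs c g < L_basic bs g" using AGall g(1) by (simp add: AG_def)
      have gc: "g \<noteq> c"
      proof
        assume "g = c"
        have "L_basic bs c \<le> U_comp bs c c" unfolding L_basic_def U_comp_def
          by (rule length_filter_mono) (auto simp: first_opt_def sigma_def split: list.splits)
        then show False using AGg \<open>g = c\<close> by simp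
      qed
      have pg: "precedes g c \<beta>" using sigma_first_precedes[OF d L(1) gc g(3)] .
      have gne: "g \<notin> eligible C s" using L(3)[OF pg] .
      have gC: "g \<in> C" using g GC by blast
      have "g \<notin> seated s"
      proof
        assume "g \<in> seated s"
        then have "g \<in> seated (sts n)" using mono[of n] kn by (auto simp: s_def)
        then have "g \<in> W \<union> {b, c}" using seatn by blast
        then show False using g(2) gc gne bs by auto
      qed
      then have gel: "g \<in> elim (sts k)" using gC gne by (auto simp: eligible_def s_def)
      have "g \<notin> elim (sts 0)" using s0 by (simp add: initial_state_def)
      then obtain j where j: "j < k" "g \<notin> elim (sts j)" "g \<in> elim (sts (Suc j))"
        using exists_change[of "\<lambda>t. g \<in> elim (sts t)" k] gel by blast
      have jn: "j \<le> n" "j \<le> k" using j kn by auto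
      have "elim_step C bs S (sts j) (sts (Suc j))"
        using nonfinal[OF j(1)] j(2,3) by (auto simp: quota_step_def Let_def)
      then obtain e where eE: "e \<in> eligible C (sts j)"
        and emin: "\<forall>e'\<in>eligible C (sts j). tally bs (sts j) e \<le> tally bs (sts j) e'"
        and s': "sts (Suc j) = \<lparr>seated = seated (sts j), elim = elim (sts j) \<union> {e},
               loc = (\<lambda>i. if loc (sts j) i = Some e then next_elig (eligible C (sts j) - {e}) (bs ! i) e else loc (sts j) i),
               val = val (sts j)\<rparr>"
        unfolding elim_step_def Let_def by blast
      have "e = g" using s' j(2,3) by auto
      have cj: "c \<in> eligible C (sts j)" using mono[OF kn] jn L(2) by (auto simp: s_def)
      have gj: "g \<in> eligible C (sts j)" using eE \<open>e = g\<close> by simp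
      have t1: "tally bs (sts j) g \<le> tally bs (sts j) c" using emin cj \<open>e = g\<close> by blast
      have G: "ginv C bs (sts j)" using ginv jn by simp
      define A where "A = {i. i < length bs \<and> first_opt (bs!i) = Some g}"
      have Ap: "A \<subseteq> pile bs (sts j) g"
      proof
        fix i' assume "i' \<in> A"
        then have "i' < length bs" "first_opt (bs!i') = Some g" by (auto simp: A_def)
        moreover have "g \<notin> seated (sts j)" "g \<notin> elim (sts j)" using gj by (auto simp: eligible_def)
        ultimately have "loc (sts j) i' = Some g" using G gC unfolding ginv_def by blast
        then show "i' \<in> pile bs (sts j) g" using \<open>i' < length bs\<close> by (simp add: pile_def)
      qed
      have A1: "\<forall>i'\<in>A. val (sts j) i' = 1"
      proof
        fix i' assume "i' \<in> A"
        then have "i' < length bs" "first_opt (bs!i') = Some g" by (auto simp: A_def)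
        moreover have "g \<notin> seated (sts j)" "g \<notin> elim (sts j)" using gj by (auto simp: eligible_def)
        ultimately show "val (sts j) i' = 1" using G gC unfolding ginv_def by blast
      qed
      have vnn: "\<forall>i'\<in>pile bs (sts j) x. 0 \<le> val (sts j) i' \<and> val (sts j) i' \<le> 1" for x
        using G by (auto simp: ginv_def pile_def)
      have "real (L_basic bs g) = (\<Sum>i'\<in>A. val (sts j) i')"
        using A1 by (simp add: L_basic_def length_filter_conv_card A_def)
      also have "\<dots> \<le> tally bs (sts j) g" unfolding tally_def
        using Ap vnn[of g] pile_finite by (intro sum_mono2) auto
      finally have t2: "real (L_basic bs g) \<le> tally bs (sts j) g" .
      define B where "B = {i. i < length bs \<and> first_opt (sigma {c, g} (bs!i)) = Some c}"
      have pB: "pile bs (sts j) c \<subseteq> B"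
      proof
        fix i' assume ip': "i' \<in> pile bs (sts j) c"
        then have i': "i' < length bs" "loc (sts j) i' = Some c" by (auto simp: pile_def)
        have "c \<in> set (bs!i')" "\<And>y. precedes y c (bs!i') \<Longrightarrow> y \<notin> eligible C (sts j)"
          using linv[OF jn(2)] i' unfolding linv_def by blast+
        then have "first_opt (sigma {c, g} (bs!i')) = Some c"
          using sigma_first_c dist i' gj by (metis nth_mem)
        then show "i' \<in> B" using i' by (simp add: B_def)
      qed
      have finB: "finite B" by (rule finite_subset[of _ "{..<length bs}"]) (auto simp: B_def)
      have "tally bs (sts j) c \<le> (\<Sum>i'\<in>pile bs (sts j) c. 1)" unfolding tally_def
        using vnn[of c] by (intro sum_mono) auto
      also have "\<dots> = real (card (pile bs (sts j) c))" by simp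
      also have "\<dots> \<le> real (card B)" using card_mono[OF finB pB] by simp
      also have "\<dots> = real (U_comp bs c g)" by (simp add: U_comp_def length_filter_conv_card B_def)
      finally have t3: "tally bs (sts j) c \<le> real (U_comp bs c g)" .
      show False using t1 t2 t3 AGg by linarith
    qed
    have nC: "first_opt (sigma {b, c} \<beta>) \<noteq> Some b"
    proof
      assume "first_opt (sigma {b, c} \<beta>) = Some b"
      then have "precedes b c \<beta>" using sigma_first_precedes[OF d L(1) bc] by blast
      then show False using L(3) bs by blast
    qed
    have v1: "val s i \<le> 1" using ginv[OF kn] i by (simp add: ginv_def s_def)
    show ?thesis
    proof (cases "\<exists>w\<in>W. first_opt \<beta> = Some w")
      case True
      then obtain w where w: "w \<in> W" "first_opt \<beta> = Some w" by blast
      have "\<exists>w\<in>W. precedes w c \<beta> \<and> val s i \<le> \<tau> w" using L(4)[OF Pt] w cW by blast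
      then obtain w' where w': "w' \<in> W" "precedes w' c \<beta>" "val s i \<le> \<tau> w'" by blast
      have "\<tau> w' \<le> Max (\<tau> ` {w \<in> W. precedes w c \<beta>})"
        using finW w' by (intro Max_ge) auto
      then show ?thesis using w' True nA nC L(1) unfolding u_complex_def s_def \<beta>_def by simp
    next
      case False
      then show ?thesis using v1 nA nC L(1) unfolding u_complex_def s_def \<beta>_def by simp
    qed
  qed
  have "tally bs (sts k) c \<le> (\<Sum>i\<in>pile bs (sts k) c. u_complex c b W \<tau> G (bs!i))"
    unfolding tally_def using ballot by (intro sum_mono) auto
  also have "\<dots> \<le> (\<Sum>i<length bs. u_complex c b W \<tau> G (bs!i))"
    using u_nonneg by (intro sum_mono2) (auto simp: pile_def)
  also have "\<dots> = U_complex bs c b W \<tau> G"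
    by (simp add: U_complex_def sum_list_sum_nth atLeast0LessThan)
  finally show ?thesis .
qed

end
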